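(* A morphism $g:(V,f,h)\to(V',f',h')$ in the category $\mathcal R(P,I)$ is a monomorphism in $\mathcal R(P,I)$ if and only if $g$ is injective (at every vertex), and it is an epimorphism in $\mathcal R(P,I)$ if and only if $g$ is surjective (at every vertex).
   Context: Let $\tilde Q$ be a finite acyclic quiver, $P$ a fixed projective representation and $I$ a fixed injective representation of $\tilde Q$ over $\mathbb C$ (finite-dimensional). The category $\mathcal R(P,I)$ has as objects triples $(V,f,h)$ with $V$ a finite-dimensional representation of $\tilde Q$, $f:P\to V$ and $h:V\to I$ morphisms of representations; a morphism $(V,f,h)\to(V',f',h')$ is a morphism of representations $g:V\to V'$ with $g\circ f=f'$ and $h'\circ g=h$; composition is composition of representation morphisms. *)

theory Defs
  imports Complex_Main "Jordan_Normal_Form.Matrix"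
begin

text \<open>A finite-dimensional representation over the complex numbers is
given (up to isomorphism, in coordinates) by a dimension vector and, for every arrow a,
a complex matrix representing the linear map from the space at src a to the space at tgt a.\<close>

record ('v, 'e) qrep =
  dimv :: "'v \<Rightarrow> nat"
  amap :: "'e \<Rightarrow> complex mat"

definition acyclic_quiver :: "('e \<Rightarrow> 'v) \<Rightarrow> ('e \<Rightarrow> 'v) \<Rightarrow> bool" where
  "acyclic_quiver src tgt \<longleftrightarrow> acyclic {(src a, tgt a) | a. True}"

definition is_rep :: "('e \<Rightarrow> 'v) \<Rightarrow> ('e \<Rightarrow> 'v) \<Rightarrow> ('v, 'e) qrep \<Rightarrow> bool" where
  "is_rep src tgt V \<longleftrightarrow>
     (\<forall>a. amap V a \<in> carrier_mat (dimv V (tgt a)) (dimv V (src a)))"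

definition rep_hom ::
  "('e \<Rightarrow> 'v) \<Rightarrow> ('e \<Rightarrow> 'v) \<Rightarrow> ('v, 'e) qrep \<Rightarrow> ('v, 'e) qrep \<Rightarrow> ('v \<Rightarrow> complex mat) \<Rightarrow> bool" where
  "rep_hom src tgt V W g \<longleftrightarrow>
     (\<forall>i. g i \<in> carrier_mat (dimv W i) (dimv V i)) \<and>
     (\<forall>a. g (tgt a) * amap V a = amap W a * g (src a))"

definition hom_comp :: "('v \<Rightarrow> complex mat) \<Rightarrow> ('v \<Rightarrow> complex mat) \<Rightarrow> ('v \<Rightarrow> complex mat)" where
  "hom_comp g2 g1 = (\<lambda>i. g2 i * g1 i)"

definition mat_inj :: "complex mat \<Rightarrow> bool" where
  "mat_inj A \<longleftrightarrow> (\<forall>x\<in>carrier_vec (dim_col A). \<forall>y\<in>carrier_vec (dim_col A).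
                     A *\<^sub>v x = A *\<^sub>v y \<longrightarrow> x = y)"

definition mat_surj :: "complex mat \<Rightarrow> bool" where
  "mat_surj A \<longleftrightarrow> (\<forall>y\<in>carrier_vec (dim_row A). \<exists>x\<in>carrier_vec (dim_col A). A *\<^sub>v x = y)"

text \<open>Projective and injective representations (in the category of finite-dimensional
representations, whose epimorphisms/monomorphisms are the vertexwise surjective/injective morphisms).\<close>
definition projective_rep :: "('e \<Rightarrow> 'v) \<Rightarrow> ('e \<Rightarrow> 'v) \<Rightarrow> ('v, 'e) qrep \<Rightarrow> bool" where
  "projective_rep src tgt P \<longleftrightarrow> is_rep src tgt P \<and>
     (\<forall>X Y p u. is_rep src tgt X \<and> is_rep src tgt Y \<and> rep_hom src tgt X Y p \<and>
        (\<forall>i. mat_surj (p i)) \<and> rep_hom src tgt P Y u \<longrightarrow>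
        (\<exists>v. rep_hom src tgt P X v \<and> hom_comp p v = u))"

definition injective_rep :: "('e \<Rightarrow> 'v) \<Rightarrow> ('e \<Rightarrow> 'v) \<Rightarrow> ('v, 'e) qrep \<Rightarrow> bool" where
  "injective_rep src tgt I \<longleftrightarrow> is_rep src tgt I \<and>
     (\<forall>X Y m u. is_rep src tgt X \<and> is_rep src tgt Y \<and> rep_hom src tgt X Y m \<and>
        (\<forall>i. mat_inj (m i)) \<and> rep_hom src tgt X I u \<longrightarrow>
        (\<exists>v. rep_hom src tgt Y I v \<and> hom_comp v m = u))"

definition R_obj ::
  "('e \<Rightarrow> 'v) \<Rightarrow> ('e \<Rightarrow> 'v) \<Rightarrow> ('v, 'e) qrep \<Rightarrow> ('v, 'e) qrep \<Rightarrow>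
   ('v, 'e) qrep \<times> ('v \<Rightarrow> complex mat) \<times> ('v \<Rightarrow> complex mat) \<Rightarrow> bool" where
  "R_obj src tgt P I X \<longleftrightarrow> (case X of (V, f, h) \<Rightarrow>
     is_rep src tgt V \<and> rep_hom src tgt P V f \<and> rep_hom src tgt V I h)"

definition R_mor ::
  "('e \<Rightarrow> 'v) \<Rightarrow> ('e \<Rightarrow> 'v) \<Rightarrow> ('v, 'e) qrep \<Rightarrow> ('v, 'e) qrep \<Rightarrow>
   ('v, 'e) qrep \<times> ('v \<Rightarrow> complex mat) \<times> ('v \<Rightarrow> complex mat) \<Rightarrow>
   ('v, 'e) qrep \<times> ('v \<Rightarrow> complex mat) \<times> ('v \<Rightarrow> complex mat) \<Rightarrow>
   ('v \<Rightarrow> complex mat) \<Rightarrow> bool" where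
  "R_mor src tgt P I X Y g \<longleftrightarrow> R_obj src tgt P I X \<and> R_obj src tgt P I Y \<and>
     (case X of (V, f, h) \<Rightarrow> case Y of (V', f', h') \<Rightarrow>
        rep_hom src tgt V V' g \<and> hom_comp g f = f' \<and> hom_comp h' g = h)"

definition R_mono ::
  "('e \<Rightarrow> 'v) \<Rightarrow> ('e \<Rightarrow> 'v) \<Rightarrow> ('v, 'e) qrep \<Rightarrow> ('v, 'e) qrep \<Rightarrow>
   ('v, 'e) qrep \<times> ('v \<Rightarrow> complex mat) \<times> ('v \<Rightarrow> complex mat) \<Rightarrow>
   ('v, 'e) qrep \<times> ('v \<Rightarrow> complex mat) \<times> ('v \<Rightarrow> complex mat) \<Rightarrow>
   ('v \<Rightarrow> complex mat) \<Rightarrow> bool" where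
  "R_mono src tgt P I X Y g \<longleftrightarrow> R_mor src tgt P I X Y g \<and>
     (\<forall>Z g1 g2. R_mor src tgt P I Z X g1 \<and> R_mor src tgt P I Z X g2 \<and>
        hom_comp g g1 = hom_comp g g2 \<longrightarrow> g1 = g2)"

definition R_epi ::
  "('e \<Rightarrow> 'v) \<Rightarrow> ('e \<Rightarrow> 'v) \<Rightarrow> ('v, 'e) qrep \<Rightarrow> ('v, 'e) qrep \<Rightarrow>
   ('v, 'e) qrep \<times> ('v \<Rightarrow> complex mat) \<times> ('v \<Rightarrow> complex mat) \<Rightarrow>
   ('v, 'e) qrep \<times> ('v \<Rightarrow> complex mat) \<times> ('v \<Rightarrow> complex mat) \<Rightarrow>
   ('v \<Rightarrow> complex mat) \<Rightarrow> bool" where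
  "R_epi src tgt P I X Y g \<longleftrightarrow> R_mor src tgt P I X Y g \<and>
     (\<forall>Z g1 g2. R_mor src tgt P I Y Z g1 \<and> R_mor src tgt P I Y Z g2 \<and>
        hom_comp g1 g = hom_comp g2 g \<longrightarrow> g1 = g2)"

end

theory Submission
  imports Defs "Jordan_Normal_Form.Gauss_Jordan_Elimination"
begin


lemma mat_eq_by_vec:
  fixes A B :: "'a::comm_ring_1 mat"
  assumes A: "A \<in> carrier_mat m n" and B: "B \<in> carrier_mat m n"
    and eq: "\<And>v. v \<in> carrier_vec n \<Longrightarrow> A *\<^sub>v v = B *\<^sub>v v"
  shows "A = B"
proof (rule eq_matI)
  fix i j assume i: "i < dim_row B" and j: "j < dim_col B"
  have "A $$ (i,j) = (A *\<^sub>v unit_vec n j) $ i" using A B i j by simp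
  also have "\<dots> = (B *\<^sub>v unit_vec n j) $ i" using eq[of "unit_vec n j"] by simp
  also have "\<dots> = B $$ (i,j)" using B i j by simp
  finally show "A $$ (i,j) = B $$ (i,j)" .
qed (use A B in auto)

lemma LA1:
  assumes A: "A \<in> carrier_mat m n" and inj: "mat_inj A"
    and B1: "B1 \<in> carrier_mat n k" and B2: "B2 \<in> carrier_mat n k"
    and eq: "A * B1 = A * B2"
  shows "B1 = B2"
proof (rule mat_col_eqI)
  fix j assume j: "j < dim_col B2"
  have "A *\<^sub>v col B1 j = col (A * B1) j" using col_mult2[OF A B1, of j] B2 j by simp
  also have "\<dots> = A *\<^sub>v col B2 j" unfolding eq using col_mult2[OF A B2, of j] B2 j by simp
  finally show "col B1 j = col B2 j" using inj A B1 B2 j unfolding mat_inj_def by auto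
qed (use B1 B2 in auto)

lemma LA2:
  assumes A: "A \<in> carrier_mat m n" and surj: "mat_surj A"
    and B1: "B1 \<in> carrier_mat k m" and B2: "B2 \<in> carrier_mat k m"
    and eq: "B1 * A = B2 * A"
  shows "B1 = B2"
proof (rule mat_eq_by_vec[OF B1 B2])
  fix y :: "complex vec" assume y: "y \<in> carrier_vec m"
  then obtain x where x: "x \<in> carrier_vec n" and Ax: "A *\<^sub>v x = y"
    using surj A unfolding mat_surj_def by auto
  have "B1 *\<^sub>v y = (B1 * A) *\<^sub>v x" using Ax A B1 x by (auto simp: assoc_mult_mat_vec)
  also have "\<dots> = B2 *\<^sub>v y" unfolding eq using Ax A B2 x by (auto simp: assoc_mult_mat_vec)
  finally show "B1 *\<^sub>v y = B2 *\<^sub>v y" .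
qed

lemma LA3:
  assumes A: "A \<in> carrier_mat m n" and ninj: "\<not> mat_inj A"
  shows "\<exists>Y. Y \<in> carrier_mat n 1 \<and> Y \<noteq> 0\<^sub>m n 1 \<and> A * Y = 0\<^sub>m m 1"
proof -
  obtain x y where x: "x \<in> carrier_vec n" and y: "y \<in> carrier_vec n"
    and eq: "A *\<^sub>v x = A *\<^sub>v y" and ne: "x \<noteq> y"
    using ninj A unfolding mat_inj_def by auto
  define Y where "Y = mat n 1 (\<lambda>(r,c). (x - y) $ r)"
  have Yc: "Y \<in> carrier_mat n 1" unfolding Y_def by auto
  have "\<exists>r. r < n \<and> (x - y) $ r \<noteq> 0"
  proof (rule ccontr)
    assume "\<not> ?thesis"
    hence z: "\<And>r. r < n \<Longrightarrow> (x - y) $ r = 0" by blast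
    have "x = y"
    proof (rule eq_vecI)
      fix i assume "i < dim_vec y"
      hence i: "i < n" using y by auto
      have "(x - y) $ i = x $ i - y $ i" using i y by simp
      thus "x $ i = y $ i" using z[OF i] by simp
    qed (use x y in auto)
    with ne show False by simp
  qed
  then obtain r where r: "r < n" and xr: "(x - y) $ r \<noteq> 0" by blast
  have "Y \<noteq> 0\<^sub>m n 1"
  proof
    assume "Y = 0\<^sub>m n 1"
    hence "Y $$ (r,0) = 0" using r by simp
    thus False using xr r unfolding Y_def by simp
  qed
  moreover have "A * Y = 0\<^sub>m m 1"
  proof (rule eq_matI)
    fix i j assume i: "i < dim_row (0\<^sub>m m 1 :: complex mat)" and j: "j < dim_col (0\<^sub>m m 1 :: complex mat)"
    have cY: "col Y 0 = x - y" unfolding Y_def using x y by (auto intro!: eq_vecI)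
    have "A *\<^sub>v (x - y) = A *\<^sub>v x - A *\<^sub>v y" using A x y by (simp add: mult_minus_distrib_mat_vec)
    also have "\<dots> = 0\<^sub>v m" unfolding eq using A y by simp
    finally have 0: "A *\<^sub>v (x - y) = 0\<^sub>v m" .
    have "col (A * Y) 0 = A *\<^sub>v col Y 0" using col_mult2[OF A Yc, of 0] by simp
    hence "col (A * Y) 0 = 0\<^sub>v m" using 0 cY by simp
    hence "(A * Y) $$ (i, 0) = 0" using i A Yc
      by (metis carrier_matD(1,2) col_def index_mult_mat(2,3) index_vec index_zero_mat(2) index_zero_vec(1) zero_less_one)
    thus "(A * Y) $$ (i, j) = 0\<^sub>m m 1 $$ (i, j)" using i j by simp
  qed (use A Yc in auto)
  ultimately show ?thesis using Yc by blast
qed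

lemma LA4:
  assumes A: "A \<in> carrier_mat m n" and nsurj: "\<not> mat_surj A"
  shows "\<exists>Psi. Psi \<in> carrier_mat 1 m \<and> Psi \<noteq> 0\<^sub>m 1 m \<and> Psi * A = 0\<^sub>m 1 n"
proof -
  define C where "C = gauss_jordan_single A"
  note gj = gauss_jordan_single[OF A C_def[symmetric]]
  have Cc: "C \<in> carrier_mat m n" using gj(2) .
  obtain P Q where CPA: "C = P * A" and P: "P \<in> carrier_mat m m" and Q: "Q \<in> carrier_mat m m"
    and PQ: "P * Q = 1\<^sub>m m" and QP: "Q * P = 1\<^sub>m m" using gj(4) by blast
  obtain p where piv: "pivot_fun C p n" using gj(3) Cc unfolding row_echelon_form_def by auto
  have dC: "dim_row C = m" using Cc by auto
  note pD = pivot_funD[OF dC piv]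
  show ?thesis
  proof (cases "\<exists>i<m. p i = n")
    case True
    then obtain i where i: "i < m" and pi: "p i = n" by blast
    have rowC: "row C i = 0\<^sub>v n" using pivot_fun_zero_row_iff[OF piv Cc i] pi by simp
    define Psi where "Psi = mat 1 m (\<lambda>(_,c). P $$ (i,c))"
    have Psic: "Psi \<in> carrier_mat 1 m" unfolding Psi_def by auto
    have rPsi: "row Psi 0 = row P i" unfolding Psi_def using P i by (auto intro!: eq_vecI)
    have "Psi * A = 0\<^sub>m 1 n"
    proof (rule eq_matI)
      fix a c assume a: "a < dim_row (0\<^sub>m 1 n :: complex mat)" and c: "c < dim_col (0\<^sub>m 1 n :: complex mat)"
      have a0: "a = 0" using a by simp
      have "(Psi * A) $$ (a, c) = row Psi 0 \<bullet> col A c" using a0 c Psic A by simp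
      also have "\<dots> = (P * A) $$ (i, c)" unfolding rPsi using c i P A by simp
      also have "\<dots> = row C i $ c" unfolding CPA using c i P A by simp
      also have "\<dots> = 0" unfolding rowC using c by simp
      finally show "(Psi * A) $$ (a, c) = 0\<^sub>m 1 n $$ (a, c)" using a c by simp
    qed (use Psic A in auto)
    moreover have "Psi \<noteq> 0\<^sub>m 1 m"
    proof
      assume "Psi = 0\<^sub>m 1 m"
      moreover have "row (0\<^sub>m 1 m :: complex mat) 0 = 0\<^sub>v m" by (rule eq_vecI) auto
      ultimately have "row P i = 0\<^sub>v m" using rPsi by simp
      hence "(P * Q) $$ (i, i) = 0" using P Q i by simp
      thus False unfolding PQ using i by simp
    qed
    ultimately show ?thesis using Psic by blast
  next
    case False
    hence pl: "\<And>i. i < m \<Longrightarrow> p i < n" using pD(1) by (meson le_neq_implies_less)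
    define X :: "complex mat" where "X = mat n m (\<lambda>(r,k). if r = p k then 1 else 0)"
    have Xc: "X \<in> carrier_mat n m" unfolding X_def by auto
    have CX: "C * X = 1\<^sub>m m"
    proof (rule eq_matI)
      fix i k assume i: "i < dim_row (1\<^sub>m m :: complex mat)" and k: "k < dim_col (1\<^sub>m m :: complex mat)"
      hence i: "i < m" and k: "k < m" by auto
      have "(C * X) $$ (i, k) = row C i \<bullet> col X k" using Cc Xc i k by simp
      also have "\<dots> = (\<Sum>r\<in>{0..<n}. C $$ (i, r) * (if r = p k then 1 else 0))"
        unfolding scalar_prod_def using Cc Xc i k by (auto simp: X_def intro!: sum.cong)
      also have "\<dots> = (\<Sum>r\<in>{0..<n}. if r = p k then C $$ (i, r) else 0)"
        by (rule sum.cong) auto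
      also have "\<dots> = C $$ (i, p k)" using pl[OF k] by simp
      also have "\<dots> = (if i = k then 1 else 0)"
        using pD(4)[OF k pl[OF k]] pD(5)[OF k pl[OF k] i] by auto
      finally show "(C * X) $$ (i, k) = 1\<^sub>m m $$ (i, k)" using i k by simp
    qed (use Cc Xc in auto)
    have AQC: "A = Q * C"
    proof -
      have "Q * C = (Q * P) * A" unfolding CPA using Q P A by (simp add: assoc_mult_mat)
      thus ?thesis unfolding QP using A by simp
    qed
    have AR: "A * (X * P) = 1\<^sub>m m"
    proof -
      have "A * (X * P) = Q * ((C * X) * P)" unfolding AQC using Q Cc Xc P
        by (simp add: assoc_mult_mat[of _ m m _ n _ m])
      also have "\<dots> = 1\<^sub>m m" unfolding CX using Q P QP by simp
      finally show ?thesis .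
    qed
    have "mat_surj A"
      unfolding mat_surj_def
    proof
      fix y :: "complex vec" assume y: "y \<in> carrier_vec (dim_row A)"
      hence y: "y \<in> carrier_vec m" using A by simp
      have XP: "X * P \<in> carrier_mat n m" using Xc P by simp
      have "A *\<^sub>v ((X * P) *\<^sub>v y) = (A * (X * P)) *\<^sub>v y"
        using assoc_mult_mat_vec[OF A XP y] by simp
      also have "\<dots> = y" unfolding AR using y by simp
      finally show "\<exists>x\<in>carrier_vec (dim_col A). A *\<^sub>v x = y" using A Xc P y
        by (intro bexI[of _ "(X * P) *\<^sub>v y"]) auto
    qed
    with nsurj show ?thesis by simp
  qed
qed



definition hcat :: "complex mat \<Rightarrow> complex mat \<Rightarrow> complex mat" where
  "hcat B C = four_block_mat B C (0\<^sub>m 0 (dim_col B)) (0\<^sub>m 0 (dim_col C))"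
definition vcat :: "complex mat \<Rightarrow> complex mat \<Rightarrow> complex mat" where
  "vcat B C = four_block_mat B (0\<^sub>m (dim_row B) 0) C (0\<^sub>m (dim_row C) 0)"

lemma zero_rows: "(M :: complex mat) \<in> carrier_mat 0 n \<Longrightarrow> M = 0\<^sub>m 0 n"
  by (rule eq_matI) auto
lemma zero_cols: "(M :: complex mat) \<in> carrier_mat n 0 \<Longrightarrow> M = 0\<^sub>m n 0"
  by (rule eq_matI) auto

lemma add_zero_right': "dim_row A = nr \<Longrightarrow> dim_col A = nc \<Longrightarrow> (A :: complex mat) + 0\<^sub>m nr nc = A"
  by (intro right_add_zero_mat carrier_matI)
lemma add_zero_left': "dim_row A = nr \<Longrightarrow> dim_col A = nc \<Longrightarrow> 0\<^sub>m nr nc + (A :: complex mat) = A"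
  by (intro left_add_zero_mat carrier_matI)
lemmas zsimps = add_zero_right' add_zero_left' left_mult_zero_mat' right_mult_zero_mat'

lemma fb_self: "(A :: complex mat) \<in> carrier_mat nr nc \<Longrightarrow>
  four_block_mat A (0\<^sub>m nr 0) (0\<^sub>m 0 nc) (0\<^sub>m 0 0) = A"
  by (rule eq_matI) auto

lemma hcat_carrier[simp]: "B \<in> carrier_mat nr n1 \<Longrightarrow> C \<in> carrier_mat nr n2 \<Longrightarrow> hcat B C \<in> carrier_mat nr (n1 + n2)"
  unfolding hcat_def by (metis add.right_neutral carrier_matD(2) four_block_carrier_mat zero_carrier_mat)
lemma vcat_carrier[simp]: "B \<in> carrier_mat n1 nc \<Longrightarrow> C \<in> carrier_mat n2 nc \<Longrightarrow> vcat B C \<in> carrier_mat (n1 + n2) nc"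
  unfolding vcat_def by (metis add.right_neutral carrier_matD(1) four_block_carrier_mat zero_carrier_mat)

lemma mult_hcat:
  assumes A: "A \<in> carrier_mat m nr" and B: "B \<in> carrier_mat nr n1" and C: "C \<in> carrier_mat nr n2"
  shows "A * hcat B C = hcat (A * B) (A * C)"
proof -
  have "A * hcat B C = four_block_mat A (0\<^sub>m m 0) (0\<^sub>m 0 nr) (0\<^sub>m 0 0) * four_block_mat B C (0\<^sub>m 0 n1) (0\<^sub>m 0 n2)"
    unfolding hcat_def fb_self[OF A] using B C by auto
  also have "\<dots> = four_block_mat (A * B + 0\<^sub>m m 0 * 0\<^sub>m 0 n1) (A * C + 0\<^sub>m m 0 * 0\<^sub>m 0 n2)
       (0\<^sub>m 0 nr * B + 0\<^sub>m 0 0 * 0\<^sub>m 0 n1) (0\<^sub>m 0 nr * C + 0\<^sub>m 0 0 * 0\<^sub>m 0 n2)"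
    by (rule mult_four_block_mat) (use A B C in auto)
  also have "\<dots> = four_block_mat (A * B) (A * C) (0\<^sub>m 0 n1) (0\<^sub>m 0 n2)"
    using A B C by (intro cong_four_block_mat) (auto intro!: zero_rows)
  also have "\<dots> = hcat (A * B) (A * C)" unfolding hcat_def using A B C by simp
  finally show ?thesis .
qed

lemma vcat_mult:
  assumes A: "A \<in> carrier_mat nc k" and B: "B \<in> carrier_mat n1 nc" and C: "C \<in> carrier_mat n2 nc"
  shows "vcat B C * A = vcat (B * A) (C * A)"
proof -
  have "vcat B C * A = four_block_mat B (0\<^sub>m n1 0) C (0\<^sub>m n2 0) * four_block_mat A (0\<^sub>m nc 0) (0\<^sub>m 0 k) (0\<^sub>m 0 0)"
    unfolding vcat_def fb_self[OF A] using B C by auto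
  also have "\<dots> = four_block_mat (B * A + 0\<^sub>m n1 0 * 0\<^sub>m 0 k) (B * 0\<^sub>m nc 0 + 0\<^sub>m n1 0 * 0\<^sub>m 0 0)
       (C * A + 0\<^sub>m n2 0 * 0\<^sub>m 0 k) (C * 0\<^sub>m nc 0 + 0\<^sub>m n2 0 * 0\<^sub>m 0 0)"
    by (rule mult_four_block_mat) (use A B C in auto)
  also have "\<dots> = four_block_mat (B * A) (0\<^sub>m n1 0) (C * A) (0\<^sub>m n2 0)"
    using A B C by (intro cong_four_block_mat) (auto intro!: zero_cols)
  also have "\<dots> = vcat (B * A) (C * A)" unfolding vcat_def using A B C by simp
  finally show ?thesis .
qed

lemma hcat_mult_vcat:
  assumes B: "B \<in> carrier_mat nr n1" and C: "C \<in> carrier_mat nr n2"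
    and D: "D \<in> carrier_mat n1 k" and E: "E \<in> carrier_mat n2 k"
  shows "hcat B C * vcat D E = B * D + C * E"
proof -
  have "hcat B C * vcat D E = four_block_mat B C (0\<^sub>m 0 n1) (0\<^sub>m 0 n2) * four_block_mat D (0\<^sub>m n1 0) E (0\<^sub>m n2 0)"
    unfolding hcat_def vcat_def using B C D E by auto
  also have "\<dots> = four_block_mat (B * D + C * E) (B * 0\<^sub>m n1 0 + C * 0\<^sub>m n2 0)
       (0\<^sub>m 0 n1 * D + 0\<^sub>m 0 n2 * E) (0\<^sub>m 0 n1 * 0\<^sub>m n1 0 + 0\<^sub>m 0 n2 * 0\<^sub>m n2 0)"
    by (rule mult_four_block_mat) (use B C D E in auto)
  also have "\<dots> = four_block_mat (B * D + C * E) (0\<^sub>m nr 0) (0\<^sub>m 0 k) (0\<^sub>m 0 0)"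
    using B C D E by (intro cong_four_block_mat) (auto intro!: zero_cols zero_rows)
  also have "\<dots> = B * D + C * E" by (rule fb_self) (use B C D E in auto)
  finally show ?thesis .
qed

lemma hcat_mult_fb:
  assumes B: "B \<in> carrier_mat nr n1" and C: "C \<in> carrier_mat nr n2"
    and D1: "D1 \<in> carrier_mat n1 k1" and D2: "D2 \<in> carrier_mat n1 k2"
    and D3: "D3 \<in> carrier_mat n2 k1" and D4: "D4 \<in> carrier_mat n2 k2"
  shows "hcat B C * four_block_mat D1 D2 D3 D4 = hcat (B * D1 + C * D3) (B * D2 + C * D4)"
proof -
  have "hcat B C * four_block_mat D1 D2 D3 D4 = four_block_mat (B * D1 + C * D3) (B * D2 + C * D4)
       (0\<^sub>m 0 n1 * D1 + 0\<^sub>m 0 n2 * D3) (0\<^sub>m 0 n1 * D2 + 0\<^sub>m 0 n2 * D4)"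
    unfolding hcat_def using B C by (simp only: carrier_matD) (intro mult_four_block_mat, use B C D1 D2 D3 D4 in auto)
  also have "\<dots> = four_block_mat (B * D1 + C * D3) (B * D2 + C * D4) (0\<^sub>m 0 k1) (0\<^sub>m 0 k2)"
    using B C D1 D2 D3 D4 by (intro cong_four_block_mat) (auto intro!: zero_rows)
  also have "\<dots> = hcat (B * D1 + C * D3) (B * D2 + C * D4)" unfolding hcat_def using B C D1 D2 D3 D4 by simp
  finally show ?thesis .
qed

lemma fb_mult_vcat:
  assumes B: "B \<in> carrier_mat n1 k" and C: "C \<in> carrier_mat n2 k"
    and D1: "D1 \<in> carrier_mat r1 n1" and D2: "D2 \<in> carrier_mat r1 n2"
    and D3: "D3 \<in> carrier_mat r2 n1" and D4: "D4 \<in> carrier_mat r2 n2"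
  shows "four_block_mat D1 D2 D3 D4 * vcat B C = vcat (D1 * B + D2 * C) (D3 * B + D4 * C)"
proof -
  have "four_block_mat D1 D2 D3 D4 * vcat B C = four_block_mat (D1 * B + D2 * C) (D1 * 0\<^sub>m n1 0 + D2 * 0\<^sub>m n2 0)
       (D3 * B + D4 * C) (D3 * 0\<^sub>m n1 0 + D4 * 0\<^sub>m n2 0)"
    unfolding vcat_def using B C by (simp only: carrier_matD) (intro mult_four_block_mat, use B C D1 D2 D3 D4 in auto)
  also have "\<dots> = four_block_mat (D1 * B + D2 * C) (0\<^sub>m r1 0) (D3 * B + D4 * C) (0\<^sub>m r2 0)"
    using B C D1 D2 D3 D4 by (intro cong_four_block_mat) (auto intro!: zero_cols)
  also have "\<dots> = vcat (D1 * B + D2 * C) (D3 * B + D4 * C)" unfolding vcat_def using B C D1 D2 D3 D4 by simp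
  finally show ?thesis .
qed

lemma hcat_eq_right:
  assumes B: "B \<in> carrier_mat nr n1" and B': "B' \<in> carrier_mat nr n1"
    and C: "C \<in> carrier_mat nr n2" and C': "C' \<in> carrier_mat nr n2"
    and eq: "hcat B C = hcat B' C'"
  shows "C = C'"
proof (rule eq_matI)
  fix i j assume i: "i < dim_row C'" and j: "j < dim_col C'"
  have "hcat B C $$ (i, n1 + j) = C $$ (i, j)" unfolding hcat_def using B C i j C' by simp
  moreover have "hcat B' C' $$ (i, n1 + j) = C' $$ (i, j)" unfolding hcat_def using B' C' i j by simp
  ultimately show "C $$ (i, j) = C' $$ (i, j)" using eq by simp
qed (use C C' in auto)

lemma vcat_eq_bot:
  assumes B: "B \<in> carrier_mat n1 nc" and B': "B' \<in> carrier_mat n1 nc"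
    and C: "C \<in> carrier_mat n2 nc" and C': "C' \<in> carrier_mat n2 nc"
    and eq: "vcat B C = vcat B' C'"
  shows "C = C'"
proof (rule eq_matI)
  fix i j assume i: "i < dim_row C'" and j: "j < dim_col C'"
  have "vcat B C $$ (n1 + i, j) = C $$ (i, j)" unfolding vcat_def using B C i j C' by simp
  moreover have "vcat B' C' $$ (n1 + i, j) = C' $$ (i, j)" unfolding vcat_def using B' C' i j by simp
  ultimately show "C $$ (i, j) = C' $$ (i, j)" using eq by simp
qed (use C C' in auto)



definition ZR :: "('e \<Rightarrow> 'v) \<Rightarrow> ('e \<Rightarrow> 'v) \<Rightarrow> ('v, 'e) qrep \<Rightarrow> ('v, 'e) qrep" where
  "ZR src tgt V = \<lparr>dimv = (\<lambda>i. dimv V i + 1),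
     amap = (\<lambda>a. four_block_mat (amap V a) (0\<^sub>m (dimv V (tgt a)) 1) (0\<^sub>m 1 (dimv V (src a))) (0\<^sub>m 1 1))\<rparr>"

definition fZ :: "('v, 'e) qrep \<Rightarrow> ('v \<Rightarrow> complex mat) \<Rightarrow> 'v \<Rightarrow> complex mat" where
  "fZ P f i = vcat (f i) (0\<^sub>m 1 (dimv P i))"
definition hZ :: "('v, 'e) qrep \<Rightarrow> ('v \<Rightarrow> complex mat) \<Rightarrow> 'v \<Rightarrow> complex mat" where
  "hZ I h i = hcat (h i) (0\<^sub>m (dimv I i) 1)"

lemma ZR_simps[simp]: "dimv (ZR src tgt V) i = dimv V i + 1"
  "amap (ZR src tgt V) a = four_block_mat (amap V a) (0\<^sub>m (dimv V (tgt a)) 1) (0\<^sub>m 1 (dimv V (src a))) (0\<^sub>m 1 1)"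
  unfolding ZR_def by simp_all

lemma ZR_amap_carrier:
  assumes "amap V a \<in> carrier_mat (dimv V (tgt a)) (dimv V (src a))"
  shows "amap (ZR src tgt V) a \<in> carrier_mat (dimv (ZR src tgt V) (tgt a)) (dimv (ZR src tgt V) (src a))"
  using assms unfolding ZR_def carrier_mat_def by simp

lemma R_obj_Z:
  assumes isP: "is_rep src tgt P" and isI: "is_rep src tgt I"
    and R: "R_obj src tgt P I (V, f, h)"
  shows "R_obj src tgt P I (ZR src tgt V, fZ P f, hZ I h)"
proof -
  from R have isV: "is_rep src tgt V" and fh: "rep_hom src tgt P V f" and hh: "rep_hom src tgt V I h"
    unfolding R_obj_def by auto
  have AV: "\<And>a. amap V a \<in> carrier_mat (dimv V (tgt a)) (dimv V (src a))" using isV unfolding is_rep_def by auto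
  have AP: "\<And>a. amap P a \<in> carrier_mat (dimv P (tgt a)) (dimv P (src a))" using isP unfolding is_rep_def by auto
  have AI: "\<And>a. amap I a \<in> carrier_mat (dimv I (tgt a)) (dimv I (src a))" using isI unfolding is_rep_def by auto
  have fc: "\<And>i. f i \<in> carrier_mat (dimv V i) (dimv P i)" and fa: "\<And>a. f (tgt a) * amap P a = amap V a * f (src a)"
    using fh unfolding rep_hom_def by auto
  have hc: "\<And>i. h i \<in> carrier_mat (dimv I i) (dimv V i)" and ha: "\<And>a. h (tgt a) * amap V a = amap I a * h (src a)"
    using hh unfolding rep_hom_def by auto
  note dims[simp] = carrier_matD[OF AV] carrier_matD[OF AP] carrier_matD[OF AI] carrier_matD[OF fc] carrier_matD[OF hc]
  have "is_rep src tgt (ZR src tgt V)" unfolding is_rep_def using ZR_amap_carrier[where src=src and tgt=tgt, OF AV] by blast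
  moreover have "rep_hom src tgt P (ZR src tgt V) (fZ P f)"
    unfolding rep_hom_def
  proof (intro conjI allI)
    fix i show "fZ P f i \<in> carrier_mat (dimv (ZR src tgt V) i) (dimv P i)"
      unfolding fZ_def ZR_simps by (rule vcat_carrier[OF fc zero_carrier_mat])
  next
    fix a
    have "fZ P f (tgt a) * amap P a = vcat (f (tgt a) * amap P a) (0\<^sub>m 1 (dimv P (tgt a)) * amap P a)"
      unfolding fZ_def by (rule vcat_mult[OF AP fc zero_carrier_mat])
    also have "\<dots> = vcat (amap V a * f (src a)) (0\<^sub>m 1 (dimv P (src a)))" using fa[of a] by (simp add: zsimps)
    also have "\<dots> = amap (ZR src tgt V) a * fZ P f (src a)"
      unfolding fZ_def ZR_simps
      by (subst fb_mult_vcat[OF fc[of "src a"] zero_carrier_mat AV[of a] zero_carrier_mat zero_carrier_mat zero_carrier_mat]) (simp add: zsimps)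
    finally show "fZ P f (tgt a) * amap P a = amap (ZR src tgt V) a * fZ P f (src a)" .
  qed
  moreover have "rep_hom src tgt (ZR src tgt V) I (hZ I h)"
    unfolding rep_hom_def
  proof (intro conjI allI)
    fix i show "hZ I h i \<in> carrier_mat (dimv I i) (dimv (ZR src tgt V) i)"
      unfolding hZ_def ZR_simps by (rule hcat_carrier[OF hc zero_carrier_mat])
  next
    fix a
    have "hZ I h (tgt a) * amap (ZR src tgt V) a = hcat (h (tgt a) * amap V a) (0\<^sub>m (dimv I (tgt a)) 1)"
      unfolding hZ_def ZR_simps
      by (subst hcat_mult_fb[OF hc[of "tgt a"] zero_carrier_mat AV[of a] zero_carrier_mat zero_carrier_mat zero_carrier_mat]) (simp add: zsimps)
    also have "\<dots> = hcat (amap I a * h (src a)) (amap I a * 0\<^sub>m (dimv I (src a)) 1)" using ha[of a] by (simp add: zsimps)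
    also have "\<dots> = amap I a * hZ I h (src a)"
      unfolding hZ_def by (rule mult_hcat[OF AI hc zero_carrier_mat, symmetric])
    finally show "hZ I h (tgt a) * amap (ZR src tgt V) a = amap I a * hZ I h (src a)" .
  qed
  ultimately show ?thesis unfolding R_obj_def by simp
qed



lemma arrows_finite: "finite {(src a, tgt a) | a. True :: bool}" for src tgt :: "'e \<Rightarrow> 'v::finite"
  by (rule finite_subset[of _ UNIV]) auto

lemma desc_mono:
  fixes src tgt :: "'e \<Rightarrow> 'v::finite"
  assumes acyc: "acyclic_quiver src tgt" and isV: "is_rep src tgt V" and isV': "is_rep src tgt V'"
    and gh: "rep_hom src tgt V V' g"
    and Y0: "Y0 \<in> carrier_mat (dimv V i0) 1" "Y0 \<noteq> 0\<^sub>m (dimv V i0) 1" "g i0 * Y0 = 0\<^sub>m (dimv V' i0) 1"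
  shows "\<exists>j Y. Y \<in> carrier_mat (dimv V j) 1 \<and> Y \<noteq> 0\<^sub>m (dimv V j) 1 \<and> g j * Y = 0\<^sub>m (dimv V' j) 1 \<and>
           (\<forall>a. src a = j \<longrightarrow> amap V a * Y = 0\<^sub>m (dimv V (tgt a)) 1)"
proof -
  let ?r = "{(src a, tgt a) | a. True}"
  have wf: "wf (?r\<inverse>)"
    using finite_acyclic_wf_converse[OF arrows_finite acyc[unfolded acyclic_quiver_def]] .
  have AV: "\<And>a. amap V a \<in> carrier_mat (dimv V (tgt a)) (dimv V (src a))" using isV unfolding is_rep_def by auto
  have AV': "\<And>a. amap V' a \<in> carrier_mat (dimv V' (tgt a)) (dimv V' (src a))" using isV' unfolding is_rep_def by auto
  have gc: "\<And>i. g i \<in> carrier_mat (dimv V' i) (dimv V i)" and ga: "\<And>a. g (tgt a) * amap V a = amap V' a * g (src a)"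
    using gh unfolding rep_hom_def by auto
  have "\<forall>Y. Y \<in> carrier_mat (dimv V i) 1 \<and> Y \<noteq> 0\<^sub>m (dimv V i) 1 \<and> g i * Y = 0\<^sub>m (dimv V' i) 1 \<longrightarrow>
     (\<exists>j Y. Y \<in> carrier_mat (dimv V j) 1 \<and> Y \<noteq> 0\<^sub>m (dimv V j) 1 \<and> g j * Y = 0\<^sub>m (dimv V' j) 1 \<and>
           (\<forall>a. src a = j \<longrightarrow> amap V a * Y = 0\<^sub>m (dimv V (tgt a)) 1))" for i
    using wf
  proof (induct i rule: wf_induct_rule)
    case (less i)
    show ?case
    proof (intro allI impI)
      fix Y assume Y: "Y \<in> carrier_mat (dimv V i) 1 \<and> Y \<noteq> 0\<^sub>m (dimv V i) 1 \<and> g i * Y = 0\<^sub>m (dimv V' i) 1"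
      show "\<exists>j Y. Y \<in> carrier_mat (dimv V j) 1 \<and> Y \<noteq> 0\<^sub>m (dimv V j) 1 \<and> g j * Y = 0\<^sub>m (dimv V' j) 1 \<and>
           (\<forall>a. src a = j \<longrightarrow> amap V a * Y = 0\<^sub>m (dimv V (tgt a)) 1)"
      proof (cases "\<forall>a. src a = i \<longrightarrow> amap V a * Y = 0\<^sub>m (dimv V (tgt a)) 1")
        case True
        then show ?thesis using Y by blast
      next
        case False
        then obtain a where a: "src a = i" and ne: "amap V a * Y \<noteq> 0\<^sub>m (dimv V (tgt a)) 1" by blast
        have Yc: "Y \<in> carrier_mat (dimv V (src a)) 1" using Y a by simp
        have Y'c: "amap V a * Y \<in> carrier_mat (dimv V (tgt a)) 1" using AV[of a] Yc by simp
        have "g (tgt a) * (amap V a * Y) = (g (tgt a) * amap V a) * Y"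
          using gc[of "tgt a"] AV[of a] Yc by (simp add: assoc_mult_mat)
        also have "\<dots> = amap V' a * (g (src a) * Y)"
          unfolding ga using AV'[of a] gc[of "src a"] Yc by (simp add: assoc_mult_mat)
        also have "\<dots> = 0\<^sub>m (dimv V' (tgt a)) 1" using Y a AV'[of a] by simp
        finally have g0: "g (tgt a) * (amap V a * Y) = 0\<^sub>m (dimv V' (tgt a)) 1" .
        have "(tgt a, i) \<in> ?r\<inverse>" using a by blast
        from less[OF this] Y'c ne g0 show ?thesis by blast
      qed
    qed
  qed
  with Y0 show ?thesis by blast
qed

lemma desc_epi:
  fixes src tgt :: "'e \<Rightarrow> 'v::finite"
  assumes acyc: "acyclic_quiver src tgt" and isV: "is_rep src tgt V" and isV': "is_rep src tgt V'"
    and gh: "rep_hom src tgt V V' g"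
    and Y0: "Y0 \<in> carrier_mat 1 (dimv V' i0)" "Y0 \<noteq> 0\<^sub>m 1 (dimv V' i0)" "Y0 * g i0 = 0\<^sub>m 1 (dimv V i0)"
  shows "\<exists>j Y. Y \<in> carrier_mat 1 (dimv V' j) \<and> Y \<noteq> 0\<^sub>m 1 (dimv V' j) \<and> Y * g j = 0\<^sub>m 1 (dimv V j) \<and>
           (\<forall>a. tgt a = j \<longrightarrow> Y * amap V' a = 0\<^sub>m 1 (dimv V' (src a)))"
proof -
  let ?r = "{(src a, tgt a) | a. True}"
  have wf: "wf ?r"
    using finite_acyclic_wf[OF arrows_finite acyc[unfolded acyclic_quiver_def]] .
  have AV: "\<And>a. amap V a \<in> carrier_mat (dimv V (tgt a)) (dimv V (src a))" using isV unfolding is_rep_def by auto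
  have AV': "\<And>a. amap V' a \<in> carrier_mat (dimv V' (tgt a)) (dimv V' (src a))" using isV' unfolding is_rep_def by auto
  have gc: "\<And>i. g i \<in> carrier_mat (dimv V' i) (dimv V i)" and ga: "\<And>a. g (tgt a) * amap V a = amap V' a * g (src a)"
    using gh unfolding rep_hom_def by auto
  have "\<forall>Y. Y \<in> carrier_mat 1 (dimv V' i) \<and> Y \<noteq> 0\<^sub>m 1 (dimv V' i) \<and> Y * g i = 0\<^sub>m 1 (dimv V i) \<longrightarrow>
     (\<exists>j Y. Y \<in> carrier_mat 1 (dimv V' j) \<and> Y \<noteq> 0\<^sub>m 1 (dimv V' j) \<and> Y * g j = 0\<^sub>m 1 (dimv V j) \<and>
           (\<forall>a. tgt a = j \<longrightarrow> Y * amap V' a = 0\<^sub>m 1 (dimv V' (src a))))" for i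
    using wf
  proof (induct i rule: wf_induct_rule)
    case (less i)
    show ?case
    proof (intro allI impI)
      fix Y assume Y: "Y \<in> carrier_mat 1 (dimv V' i) \<and> Y \<noteq> 0\<^sub>m 1 (dimv V' i) \<and> Y * g i = 0\<^sub>m 1 (dimv V i)"
      show "\<exists>j Y. Y \<in> carrier_mat 1 (dimv V' j) \<and> Y \<noteq> 0\<^sub>m 1 (dimv V' j) \<and> Y * g j = 0\<^sub>m 1 (dimv V j) \<and>
           (\<forall>a. tgt a = j \<longrightarrow> Y * amap V' a = 0\<^sub>m 1 (dimv V' (src a)))"
      proof (cases "\<forall>a. tgt a = i \<longrightarrow> Y * amap V' a = 0\<^sub>m 1 (dimv V' (src a))")
        case True
        then show ?thesis using Y by blast
      next
        case False
        then obtain a where a: "tgt a = i" and ne: "Y * amap V' a \<noteq> 0\<^sub>m 1 (dimv V' (src a))" by blast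
        have Yc: "Y \<in> carrier_mat 1 (dimv V' (tgt a))" using Y a by simp
        have Y'c: "Y * amap V' a \<in> carrier_mat 1 (dimv V' (src a))" using AV'[of a] Yc by simp
        have "(Y * amap V' a) * g (src a) = Y * (amap V' a * g (src a))"
          using gc[of "src a"] AV'[of a] Yc by (simp add: assoc_mult_mat)
        also have "\<dots> = (Y * g (tgt a)) * amap V a"
          unfolding ga[symmetric] using AV[of a] gc[of "tgt a"] Yc by (simp add: assoc_mult_mat)
        also have "\<dots> = 0\<^sub>m 1 (dimv V (src a))" using Y a AV[of a] by simp
        finally have g0: "(Y * amap V' a) * g (src a) = 0\<^sub>m 1 (dimv V (src a))" .
        have "(src a, i) \<in> ?r" using a by blast
        from less[OF this] Y'c ne g0 show ?thesis by blast
      qed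
    qed
  qed
  with Y0 show ?thesis by blast
qed



lemma R_mor_G1:
  assumes isP: "is_rep src tgt P" and isI: "is_rep src tgt I"
    and RX: "R_obj src tgt P I (V, f, h)"
    and yc: "\<And>i. y i \<in> carrier_mat (dimv V i) 1"
    and ya: "\<And>a. amap V a * y (src a) = 0\<^sub>m (dimv V (tgt a)) 1"
    and yh: "\<And>i. h i * y i = 0\<^sub>m (dimv I i) 1"
  shows "R_mor src tgt P I (ZR src tgt V, fZ P f, hZ I h) (V, f, h) (\<lambda>i. hcat (1\<^sub>m (dimv V i)) (y i))"
proof -
  from RX have isV: "is_rep src tgt V" and fh: "rep_hom src tgt P V f" and hh: "rep_hom src tgt V I h"
    unfolding R_obj_def by auto
  have AV: "\<And>a. amap V a \<in> carrier_mat (dimv V (tgt a)) (dimv V (src a))" using isV unfolding is_rep_def by auto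
  have fc: "\<And>i. f i \<in> carrier_mat (dimv V i) (dimv P i)"
    using fh unfolding rep_hom_def by auto
  have hc: "\<And>i. h i \<in> carrier_mat (dimv I i) (dimv V i)"
    using hh unfolding rep_hom_def by auto
  note dims[simp] = carrier_matD[OF AV] carrier_matD[OF fc] carrier_matD[OF hc] carrier_matD[OF yc]
  have rh: "rep_hom src tgt (ZR src tgt V) V (\<lambda>i. hcat (1\<^sub>m (dimv V i)) (y i))"
    unfolding rep_hom_def
  proof (intro conjI allI)
    fix i show "hcat (1\<^sub>m (dimv V i)) (y i) \<in> carrier_mat (dimv V i) (dimv (ZR src tgt V) i)"
      unfolding ZR_simps by (rule hcat_carrier[OF one_carrier_mat yc])
  next
    fix a
    have "hcat (1\<^sub>m (dimv V (tgt a))) (y (tgt a)) * amap (ZR src tgt V) a = hcat (amap V a) (0\<^sub>m (dimv V (tgt a)) 1)"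
      unfolding ZR_simps
      by (subst hcat_mult_fb[OF one_carrier_mat yc[of "tgt a"] AV[of a] zero_carrier_mat zero_carrier_mat zero_carrier_mat]) (simp add: zsimps)
    also have "\<dots> = amap V a * hcat (1\<^sub>m (dimv V (src a))) (y (src a))"
      by (subst mult_hcat[OF AV[of a] one_carrier_mat yc]) (simp add: ya)
    finally show "hcat (1\<^sub>m (dimv V (tgt a))) (y (tgt a)) * amap (ZR src tgt V) a = amap V a * hcat (1\<^sub>m (dimv V (src a))) (y (src a))" .
  qed
  have c1: "hom_comp (\<lambda>i. hcat (1\<^sub>m (dimv V i)) (y i)) (fZ P f) = f"
    unfolding hom_comp_def fZ_def
  proof
    fix i show "hcat (1\<^sub>m (dimv V i)) (y i) * vcat (f i) (0\<^sub>m 1 (dimv P i)) = f i"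
      by (subst hcat_mult_vcat[OF one_carrier_mat yc fc zero_carrier_mat]) (simp add: zsimps)
  qed
  have c2: "hom_comp h (\<lambda>i. hcat (1\<^sub>m (dimv V i)) (y i)) = hZ I h"
    unfolding hom_comp_def hZ_def
  proof
    fix i show "h i * hcat (1\<^sub>m (dimv V i)) (y i) = hcat (h i) (0\<^sub>m (dimv I i) 1)"
      by (subst mult_hcat[OF hc one_carrier_mat yc]) (simp add: yh)
  qed
  show ?thesis unfolding R_mor_def using R_obj_Z[OF isP isI RX] RX rh c1 c2 by simp
qed

lemma R_mor_G2:
  assumes isP: "is_rep src tgt P" and isI: "is_rep src tgt I"
    and RX: "R_obj src tgt P I (V, f, h)"
    and yc: "\<And>i. y i \<in> carrier_mat 1 (dimv V i)"
    and ya: "\<And>a. y (tgt a) * amap V a = 0\<^sub>m 1 (dimv V (src a))"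
    and yf: "\<And>i. y i * f i = 0\<^sub>m 1 (dimv P i)"
  shows "R_mor src tgt P I (V, f, h) (ZR src tgt V, fZ P f, hZ I h) (\<lambda>i. vcat (1\<^sub>m (dimv V i)) (y i))"
proof -
  from RX have isV: "is_rep src tgt V" and fh: "rep_hom src tgt P V f" and hh: "rep_hom src tgt V I h"
    unfolding R_obj_def by auto
  have AV: "\<And>a. amap V a \<in> carrier_mat (dimv V (tgt a)) (dimv V (src a))" using isV unfolding is_rep_def by auto
  have fc: "\<And>i. f i \<in> carrier_mat (dimv V i) (dimv P i)"
    using fh unfolding rep_hom_def by auto
  have hc: "\<And>i. h i \<in> carrier_mat (dimv I i) (dimv V i)"
    using hh unfolding rep_hom_def by auto
  note dims[simp] = carrier_matD[OF AV] carrier_matD[OF fc] carrier_matD[OF hc] carrier_matD[OF yc]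
  have rh: "rep_hom src tgt V (ZR src tgt V) (\<lambda>i. vcat (1\<^sub>m (dimv V i)) (y i))"
    unfolding rep_hom_def
  proof (intro conjI allI)
    fix i show "vcat (1\<^sub>m (dimv V i)) (y i) \<in> carrier_mat (dimv (ZR src tgt V) i) (dimv V i)"
      unfolding ZR_simps by (rule vcat_carrier[OF one_carrier_mat yc])
  next
    fix a
    have "vcat (1\<^sub>m (dimv V (tgt a))) (y (tgt a)) * amap V a = vcat (amap V a) (0\<^sub>m 1 (dimv V (src a)))"
      by (subst vcat_mult[OF AV[of a] one_carrier_mat yc]) (simp add: ya)
    also have "\<dots> = amap (ZR src tgt V) a * vcat (1\<^sub>m (dimv V (src a))) (y (src a))"
      unfolding ZR_simps
      by (subst fb_mult_vcat[OF one_carrier_mat yc[of "src a"] AV[of a] zero_carrier_mat zero_carrier_mat zero_carrier_mat]) (simp add: zsimps)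
    finally show "vcat (1\<^sub>m (dimv V (tgt a))) (y (tgt a)) * amap V a = amap (ZR src tgt V) a * vcat (1\<^sub>m (dimv V (src a))) (y (src a))" .
  qed
  have c1: "hom_comp (\<lambda>i. vcat (1\<^sub>m (dimv V i)) (y i)) f = fZ P f"
    unfolding hom_comp_def fZ_def
  proof
    fix i show "vcat (1\<^sub>m (dimv V i)) (y i) * f i = vcat (f i) (0\<^sub>m 1 (dimv P i))"
      by (subst vcat_mult[OF fc one_carrier_mat yc]) (simp add: yf)
  qed
  have c2: "hom_comp (hZ I h) (\<lambda>i. vcat (1\<^sub>m (dimv V i)) (y i)) = h"
    unfolding hom_comp_def hZ_def
  proof
    fix i show "hcat (h i) (0\<^sub>m (dimv I i) 1) * vcat (1\<^sub>m (dimv V i)) (y i) = h i"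
      by (subst hcat_mult_vcat[OF hc zero_carrier_mat one_carrier_mat yc]) (simp add: zsimps)
  qed
  show ?thesis unfolding R_mor_def using R_obj_Z[OF isP isI RX] RX rh c1 c2 by simp
qed



lemma mono_part:
  fixes src tgt :: "'e \<Rightarrow> 'v::finite"
  assumes acyc: "acyclic_quiver src tgt" and isP: "is_rep src tgt P" and isI: "is_rep src tgt I"
    and RM: "R_mor src tgt P I (V, f, h) (V', f', h') g"
  shows "R_mono src tgt P I (V, f, h) (V', f', h') g \<longleftrightarrow> (\<forall>i. mat_inj (g i))"
proof -
  from RM have RX: "R_obj src tgt P I (V, f, h)" and RX': "R_obj src tgt P I (V', f', h')"
    and gh: "rep_hom src tgt V V' g" and gf: "hom_comp g f = f'" and hg: "hom_comp h' g = h"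
    unfolding R_mor_def by auto
  from RX have isV: "is_rep src tgt V" and hh: "rep_hom src tgt V I h" unfolding R_obj_def by auto
  from RX' have isV': "is_rep src tgt V'" and hh': "rep_hom src tgt V' I h'" unfolding R_obj_def by auto
  have gc: "\<And>i. g i \<in> carrier_mat (dimv V' i) (dimv V i)" using gh unfolding rep_hom_def by auto
  have h'c: "\<And>i. h' i \<in> carrier_mat (dimv I i) (dimv V' i)" using hh' unfolding rep_hom_def by auto
  have AV: "\<And>a. amap V a \<in> carrier_mat (dimv V (tgt a)) (dimv V (src a))" using isV unfolding is_rep_def by auto
  have hgi: "\<And>i. h i = h' i * g i" using hg unfolding hom_comp_def by (metis)
  show ?thesis
  proof
    assume mono: "R_mono src tgt P I (V, f, h) (V', f', h') g"
    show "\<forall>i. mat_inj (g i)"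
    proof (rule ccontr)
      assume "\<not> (\<forall>i. mat_inj (g i))"
      then obtain i0 where "\<not> mat_inj (g i0)" by blast
      from LA3[OF gc this] obtain Y0 where "Y0 \<in> carrier_mat (dimv V i0) 1" "Y0 \<noteq> 0\<^sub>m (dimv V i0) 1"
        "g i0 * Y0 = 0\<^sub>m (dimv V' i0) 1" by blast
      from desc_mono[OF acyc isV isV' gh this] obtain j Y where
        Yc: "Y \<in> carrier_mat (dimv V j) 1" and Yne: "Y \<noteq> 0\<^sub>m (dimv V j) 1"
        and gY: "g j * Y = 0\<^sub>m (dimv V' j) 1"
        and aY: "\<And>a. src a = j \<Longrightarrow> amap V a * Y = 0\<^sub>m (dimv V (tgt a)) 1" by blast
      define y where "y i = (if i = j then Y else 0\<^sub>m (dimv V i) 1)" for i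
      have yc: "\<And>i. y i \<in> carrier_mat (dimv V i) 1" unfolding y_def using Yc by auto
      have ya: "\<And>a. amap V a * y (src a) = 0\<^sub>m (dimv V (tgt a)) 1"
        unfolding y_def using aY carrier_matD[OF AV] by (auto simp: zsimps)
      have gy: "\<And>i. g i * y i = 0\<^sub>m (dimv V' i) 1"
        unfolding y_def using gY carrier_matD[OF gc] by (auto simp: zsimps)
      have yh: "\<And>i. h i * y i = 0\<^sub>m (dimv I i) 1"
      proof -
        fix i
        have "h i * y i = h' i * (g i * y i)" unfolding hgi by (rule assoc_mult_mat[OF h'c gc yc])
        also have "\<dots> = 0\<^sub>m (dimv I i) 1" unfolding gy by (rule right_mult_zero_mat[OF h'c])
        finally show "h i * y i = 0\<^sub>m (dimv I i) 1" .
      qed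
      define z where "z i = (0\<^sub>m (dimv V i) 1 :: complex mat)" for i
      have zc: "\<And>i. z i \<in> carrier_mat (dimv V i) 1" unfolding z_def by auto
      have za: "\<And>a. amap V a * z (src a) = 0\<^sub>m (dimv V (tgt a)) 1" unfolding z_def using carrier_matD[OF AV] by (simp add: zsimps)
      have hc: "\<And>i. h i \<in> carrier_mat (dimv I i) (dimv V i)" using hh unfolding rep_hom_def by auto
      have zh: "\<And>i. h i * z i = 0\<^sub>m (dimv I i) 1" unfolding z_def using carrier_matD[OF hc] by (simp add: zsimps)
      have gz: "\<And>i. g i * z i = 0\<^sub>m (dimv V' i) 1" unfolding z_def using carrier_matD[OF gc] by (simp add: zsimps)
      note M1 = R_mor_G1[OF isP isI RX yc ya yh]
      note M2 = R_mor_G1[OF isP isI RX zc za zh]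
      have eq: "hom_comp g (\<lambda>i. hcat (1\<^sub>m (dimv V i)) (y i)) = hom_comp g (\<lambda>i. hcat (1\<^sub>m (dimv V i)) (z i))"
        unfolding hom_comp_def
      proof
        fix i
        show "g i * hcat (1\<^sub>m (dimv V i)) (y i) = g i * hcat (1\<^sub>m (dimv V i)) (z i)"
          using mult_hcat[OF gc one_carrier_mat yc, of i] mult_hcat[OF gc one_carrier_mat zc, of i] gy gz
          by simp
      qed
      from mono M1 M2 eq have "(\<lambda>i. hcat (1\<^sub>m (dimv V i)) (y i)) = (\<lambda>i. hcat (1\<^sub>m (dimv V i)) (z i))"
        unfolding R_mono_def by blast
      hence "hcat (1\<^sub>m (dimv V j)) (y j) = hcat (1\<^sub>m (dimv V j)) (z j)" by metis
      from hcat_eq_right[OF one_carrier_mat one_carrier_mat yc zc this] have "y j = z j" .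
      thus False using Yne unfolding y_def z_def by simp
    qed
  next
    assume inj: "\<forall>i. mat_inj (g i)"
    show "R_mono src tgt P I (V, f, h) (V', f', h') g"
      unfolding R_mono_def
    proof (intro conjI allI impI)
      show "R_mor src tgt P I (V, f, h) (V', f', h') g" by (rule RM)
    next
      fix Z g1 g2
      assume a: "R_mor src tgt P I Z (V, f, h) g1 \<and> R_mor src tgt P I Z (V, f, h) g2 \<and> hom_comp g g1 = hom_comp g g2"
      obtain W fw hw where Z: "Z = (W, fw, hw)" by (cases Z) auto
      from a have r1: "rep_hom src tgt W V g1" and r2: "rep_hom src tgt W V g2"
        unfolding Z R_mor_def by auto
      have c1: "\<And>i. g1 i \<in> carrier_mat (dimv V i) (dimv W i)" using r1 unfolding rep_hom_def by auto
      have c2: "\<And>i. g2 i \<in> carrier_mat (dimv V i) (dimv W i)" using r2 unfolding rep_hom_def by auto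
      have e: "\<And>i. g i * g1 i = g i * g2 i" using a unfolding hom_comp_def by metis
      show "g1 = g2"
      proof
        fix i show "g1 i = g2 i" using LA1[OF gc inj[rule_format] c1 c2 e] .
      qed
    qed
  qed
qed

lemma epi_part:
  fixes src tgt :: "'e \<Rightarrow> 'v::finite"
  assumes acyc: "acyclic_quiver src tgt" and isP: "is_rep src tgt P" and isI: "is_rep src tgt I"
    and RM: "R_mor src tgt P I (V, f, h) (V', f', h') g"
  shows "R_epi src tgt P I (V, f, h) (V', f', h') g \<longleftrightarrow> (\<forall>i. mat_surj (g i))"
proof -
  from RM have RX: "R_obj src tgt P I (V, f, h)" and RX': "R_obj src tgt P I (V', f', h')"
    and gh: "rep_hom src tgt V V' g" and gf: "hom_comp g f = f'" and hg: "hom_comp h' g = h"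
    unfolding R_mor_def by auto
  from RX have isV: "is_rep src tgt V" and fh: "rep_hom src tgt P V f" unfolding R_obj_def by auto
  from RX' have isV': "is_rep src tgt V'" unfolding R_obj_def by auto
  have gc: "\<And>i. g i \<in> carrier_mat (dimv V' i) (dimv V i)" using gh unfolding rep_hom_def by auto
  have fc: "\<And>i. f i \<in> carrier_mat (dimv V i) (dimv P i)" using fh unfolding rep_hom_def by auto
  have AV': "\<And>a. amap V' a \<in> carrier_mat (dimv V' (tgt a)) (dimv V' (src a))" using isV' unfolding is_rep_def by auto
  have fgi: "\<And>i. f' i = g i * f i" using gf unfolding hom_comp_def by (metis)
  show ?thesis
  proof
    assume epi: "R_epi src tgt P I (V, f, h) (V', f', h') g"
    show "\<forall>i. mat_surj (g i)"
    proof (rule ccontr)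
      assume "\<not> (\<forall>i. mat_surj (g i))"
      then obtain i0 where "\<not> mat_surj (g i0)" by blast
      from LA4[OF gc this] obtain Y0 where "Y0 \<in> carrier_mat 1 (dimv V' i0)" "Y0 \<noteq> 0\<^sub>m 1 (dimv V' i0)"
        "Y0 * g i0 = 0\<^sub>m 1 (dimv V i0)" by blast
      from desc_epi[OF acyc isV isV' gh this] obtain j Y where
        Yc: "Y \<in> carrier_mat 1 (dimv V' j)" and Yne: "Y \<noteq> 0\<^sub>m 1 (dimv V' j)"
        and gY: "Y * g j = 0\<^sub>m 1 (dimv V j)"
        and aY: "\<And>a. tgt a = j \<Longrightarrow> Y * amap V' a = 0\<^sub>m 1 (dimv V' (src a))" by blast
      define y where "y i = (if i = j then Y else 0\<^sub>m 1 (dimv V' i))" for i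
      have yc: "\<And>i. y i \<in> carrier_mat 1 (dimv V' i)" unfolding y_def using Yc by auto
      have ya: "\<And>a. y (tgt a) * amap V' a = 0\<^sub>m 1 (dimv V' (src a))"
        unfolding y_def using aY carrier_matD[OF AV'] by (auto simp: zsimps)
      have gy: "\<And>i. y i * g i = 0\<^sub>m 1 (dimv V i)"
        unfolding y_def using gY carrier_matD[OF gc] by (auto simp: zsimps)
      have yf: "\<And>i. y i * f' i = 0\<^sub>m 1 (dimv P i)"
      proof -
        fix i
        have "y i * f' i = (y i * g i) * f i" unfolding fgi by (rule assoc_mult_mat[OF yc gc fc, symmetric])
        also have "\<dots> = 0\<^sub>m 1 (dimv P i)" unfolding gy by (rule left_mult_zero_mat[OF fc])
        finally show "y i * f' i = 0\<^sub>m 1 (dimv P i)" .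
      qed
      define z where "z i = (0\<^sub>m 1 (dimv V' i) :: complex mat)" for i
      have zc: "\<And>i. z i \<in> carrier_mat 1 (dimv V' i)" unfolding z_def by auto
      have za: "\<And>a. z (tgt a) * amap V' a = 0\<^sub>m 1 (dimv V' (src a))" unfolding z_def using carrier_matD[OF AV'] by (simp add: zsimps)
      have f'c: "\<And>i. f' i \<in> carrier_mat (dimv V' i) (dimv P i)" unfolding fgi by (rule mult_carrier_mat[OF gc fc])
      have zf: "\<And>i. z i * f' i = 0\<^sub>m 1 (dimv P i)" unfolding z_def using carrier_matD[OF f'c] by (simp add: zsimps)
      have gz: "\<And>i. z i * g i = 0\<^sub>m 1 (dimv V i)" unfolding z_def using carrier_matD[OF gc] by (simp add: zsimps)
      note M1 = R_mor_G2[OF isP isI RX' yc ya yf]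
      note M2 = R_mor_G2[OF isP isI RX' zc za zf]
      have eq: "hom_comp (\<lambda>i. vcat (1\<^sub>m (dimv V' i)) (y i)) g = hom_comp (\<lambda>i. vcat (1\<^sub>m (dimv V' i)) (z i)) g"
        unfolding hom_comp_def
      proof
        fix i
        show "vcat (1\<^sub>m (dimv V' i)) (y i) * g i = vcat (1\<^sub>m (dimv V' i)) (z i) * g i"
          using vcat_mult[OF gc one_carrier_mat yc, of i] vcat_mult[OF gc one_carrier_mat zc, of i] gy gz
          by simp
      qed
      from epi M1 M2 eq have "(\<lambda>i. vcat (1\<^sub>m (dimv V' i)) (y i)) = (\<lambda>i. vcat (1\<^sub>m (dimv V' i)) (z i))"
        unfolding R_epi_def by blast
      hence "vcat (1\<^sub>m (dimv V' j)) (y j) = vcat (1\<^sub>m (dimv V' j)) (z j)" by metis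
      from vcat_eq_bot[OF one_carrier_mat one_carrier_mat yc zc this] have "y j = z j" .
      thus False using Yne unfolding y_def z_def by simp
    qed
  next
    assume surj: "\<forall>i. mat_surj (g i)"
    show "R_epi src tgt P I (V, f, h) (V', f', h') g"
      unfolding R_epi_def
    proof (intro conjI allI impI)
      show "R_mor src tgt P I (V, f, h) (V', f', h') g" by (rule RM)
    next
      fix Z g1 g2
      assume a: "R_mor src tgt P I (V', f', h') Z g1 \<and> R_mor src tgt P I (V', f', h') Z g2 \<and> hom_comp g1 g = hom_comp g2 g"
      obtain W fw hw where Z: "Z = (W, fw, hw)" by (cases Z) auto
      from a have r1: "rep_hom src tgt V' W g1" and r2: "rep_hom src tgt V' W g2"
        unfolding Z R_mor_def by auto
      have c1: "\<And>i. g1 i \<in> carrier_mat (dimv W i) (dimv V' i)" using r1 unfolding rep_hom_def by auto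
      have c2: "\<And>i. g2 i \<in> carrier_mat (dimv W i) (dimv V' i)" using r2 unfolding rep_hom_def by auto
      have e: "\<And>i. g1 i * g i = g2 i * g i" using a unfolding hom_comp_def by metis
      show "g1 = g2"
      proof
        fix i show "g1 i = g2 i" using LA2[OF gc surj[rule_format] c1 c2 e] .
      qed
    qed
  qed
qed

theorem mainTheorem12:
  fixes src tgt :: "'e::finite \<Rightarrow> 'v::finite"
    and P I V V' :: "('v, 'e) qrep"
    and f h f' h' g :: "'v \<Rightarrow> complex mat"
  assumes "acyclic_quiver src tgt"
    and "projective_rep src tgt P"
    and "injective_rep src tgt I"
    and "R_mor src tgt P I (V, f, h) (V', f', h') g"
  shows "(R_mono src tgt P I (V, f, h) (V', f', h') g \<longleftrightarrow> (\<forall>i. mat_inj (g i))) \<and>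
         (R_epi src tgt P I (V, f, h) (V', f', h') g \<longleftrightarrow> (\<forall>i. mat_surj (g i)))"
proof -
  have isP: "is_rep src tgt P" using assms(2) unfolding projective_rep_def by simp
  have isI: "is_rep src tgt I" using assms(3) unfolding injective_rep_def by simp
  show ?thesis using mono_part[OF assms(1) isP isI assms(4)] epi_part[OF assms(1) isP isI assms(4)] by simp
qed

end
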